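(* Let $G$ be a simple graph on $n$ vertices and let $f$ be its associated quadratic Boolean function. Then for every graph $H$ in the LC orbit $[G]$, the Boolean function associated with $H$ has $\mathrm{PAR}_{IHN}=2^{\lambda(G)}$. In particular $\mathrm{PAR}_{IHN}(f)=2^{\lambda(G)}$.
   Context: All graphs are finite, simple and undirected, with vertex set $\{0,\dots,n-1\}$. The Boolean function associated with $G$ is $f(\boldsymbol{x})=\sum_{\{i,j\}\in E(G)} x_ix_j \pmod 2$, $\boldsymbol{x}\in\mathbb{Z}_2^n$. For $v\in V$ with neighbourhood $N_v$, the local complementation $G^v$ complements the subgraph induced on $N_v$; the LC orbit $[G]$ is the set of graphs obtainable from $G$ by finite sequences of local complementations. $\alpha(G)$ is the independence number and $\lambda(G)=\max_{H\in[G]}\alpha(H)$. Let $I=\begin{pmatrix}1&0\\0&1\end{pmatrix}$, $H=\frac1{\sqrt2}\begin{pmatrix}1&1\\1&-1\end{pmatrix}$, $N=\frac1{\sqrt2}\begin{pmatrix}1&i\\1&-i\end{pmatrix}$ with $i^2=-1$. For a Boolean function $f$ on $n$ variables, let $\boldsymbol{s}\in\mathbb{C}^{2^n}$ be the vector with entries $s_{\boldsymbol{x}}=2^{-n/2}(-1)^{f(\boldsymbol{x})}$ (indexed by $\boldsymbol{x}\in\mathbb{Z}_2^n$ in the standard order consistent with the Kronecker product). Then $\mathrm{PAR}_{IHN}(f)=2^n\max_{U}\max_{k}|(U\boldsymbol{s})_k|^2$, the maximum over all $3^n$ transforms $U=U_0\otimes\cdots\otimes U_{n-1}$ with each $U_j\in\{I,H,N\}$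 and over all coordinates $k\in\mathbb{Z}_{2^n}$. *)

theory Defs
  imports Complex_Main "HOL-Library.FuncSet"
begin

definition simple_graph :: "nat \<Rightarrow> nat set set \<Rightarrow> bool" where
  "simple_graph n E \<longleftrightarrow> (\<forall>e\<in>E. \<exists>i j. i < n \<and> j < n \<and> i \<noteq> j \<and> e = {i, j})"

definition nbhd :: "nat set set \<Rightarrow> nat \<Rightarrow> nat set" where
  "nbhd E v = {u. {u, v} \<in> E}"

definition local_compl :: "nat set set \<Rightarrow> nat \<Rightarrow> nat set set" where
  "local_compl E v =
     (let T = {{u, w} | u w. u \<in> nbhd E v \<and> w \<in> nbhd E v \<and> u \<noteq> w}
      in (E - T) \<union> (T - E))"

inductive_set lc_orbit :: "nat \<Rightarrow> nat set set \<Rightarrow> nat set set set"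
  for n :: nat and E :: "nat set set" where
  refl: "E \<in> lc_orbit n E"
| step: "H \<in> lc_orbit n E \<Longrightarrow> v < n \<Longrightarrow> local_compl H v \<in> lc_orbit n E"

definition independent_set :: "nat \<Rightarrow> nat set set \<Rightarrow> nat set \<Rightarrow> bool" where
  "independent_set n E S \<longleftrightarrow> S \<subseteq> {0..<n} \<and> (\<forall>u\<in>S. \<forall>w\<in>S. {u, w} \<notin> E)"

definition independence_number :: "nat \<Rightarrow> nat set set \<Rightarrow> nat" where
  "independence_number n E = Max {card S | S. independent_set n E S}"

definition lc_lambda :: "nat \<Rightarrow> nat set set \<Rightarrow> nat" where
  "lc_lambda n E = Max (independence_number n ` lc_orbit n E)"

definition cube :: "nat \<Rightarrow> (nat \<Rightarrow> nat) set" where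
  "cube n = Pi\<^sub>E {0..<n} (\<lambda>_. {0, 1})"

definition graph_bf :: "nat \<Rightarrow> nat set set \<Rightarrow> (nat \<Rightarrow> nat) \<Rightarrow> nat" where
  "graph_bf n E x = (\<Sum>(i, j) \<in> {(i, j). i < j \<and> j < n \<and> {i, j} \<in> E}. x i * x j) mod 2"

text \<open>The 2x2 matrices I (code 0), H (code 1), N (code 2), indexed by {0,1}.\<close>
definition mat_IHN :: "nat \<Rightarrow> nat \<Rightarrow> nat \<Rightarrow> complex" where
  "mat_IHN c a b =
     (if c = 0 then (if a = b then 1 else 0)
      else if c = 1 then (if a = 1 \<and> b = 1 then -1 else 1) / complex_of_real (sqrt 2)
      else (if b = 0 then 1 else if a = 0 then \<i> else - \<i>) / complex_of_real (sqrt 2))"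

text \<open>Entry k of (U_0 \<otimes> ... \<otimes> U_{n-1}) s, where U_j = mat_IHN (c j), with
  s_x = 2^(-n/2) (-1)^(f x).\<close>
definition transform_entry ::
  "nat \<Rightarrow> ((nat \<Rightarrow> nat) \<Rightarrow> nat) \<Rightarrow> (nat \<Rightarrow> nat) \<Rightarrow> (nat \<Rightarrow> nat) \<Rightarrow> complex" where
  "transform_entry n f c k =
     (\<Sum>x\<in>cube n. (\<Prod>j<n. mat_IHN (c j) (k j) (x j))
        * complex_of_real (2 powr (- real n / 2)) * (-1) ^ f x)"

definition PAR_IHN :: "nat \<Rightarrow> ((nat \<Rightarrow> nat) \<Rightarrow> nat) \<Rightarrow> real" where
  "PAR_IHN n f = 2 ^ n *
     Max {(cmod (transform_entry n f c k))\<^sup>2 | c k.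
            c \<in> Pi\<^sub>E {0..<n} (\<lambda>_. {0, 1, 2}) \<and> k \<in> cube n}"

end

theory Submission
  imports Defs
begin

definition psi :: "nat set set \<Rightarrow> (nat \<Rightarrow> nat) \<Rightarrow> complex" where
  "psi E x = (\<Prod>e\<in>E. (-1) ^ (\<Prod>i\<in>e. x i))"

definition TT :: "nat \<Rightarrow> nat set set \<Rightarrow> (nat \<Rightarrow> nat) \<Rightarrow> (nat \<Rightarrow> nat) \<Rightarrow> complex" where
  "TT n E c k = (\<Sum>x\<in>cube n. (\<Prod>j<n. mat_IHN (c j) (k j) (x j)) * psi E x)"

lemma graph_bf_psi:
  assumes "simple_graph n E"
  shows "(-1::complex) ^ graph_bf n E x = psi E x"
proof -
  define P where "P = {(i, j). i < j \<and> j < n \<and> {i, j} \<in> E}"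
  have "(-1::complex) ^ graph_bf n E x = (-1) ^ (\<Sum>(i, j) \<in> P. x i * x j)"
    unfolding graph_bf_def P_def by (simp add: minus_one_power_iff)
  also have "\<dots> = (\<Prod>p\<in>P. (-1) ^ (x (fst p) * x (snd p)))"
    by (simp add: power_sum case_prod_beta)
  also have "\<dots> = (\<Prod>p\<in>P. (-1) ^ (\<Prod>i\<in>{fst p, snd p}. x i))"
    by (rule prod.cong) (auto simp: P_def)
  also have "\<dots> = psi E x"
  proof -
    have "bij_betw (\<lambda>p. {fst p, snd p}) P E"
    proof (rule bij_betwI')
      fix p q assume "p \<in> P" "q \<in> P"
      then show "({fst p, snd p} = {fst q, snd q}) = (p = q)"
        unfolding P_def by (auto simp: doubleton_eq_iff prod_eq_iff)
    next
      fix p assume "p \<in> P" then show "{fst p, snd p} \<in> E" by (auto simp: P_def)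
    next
      fix e assume "e \<in> E"
      then obtain i j where ij: "i < n" "j < n" "i \<noteq> j" "e = {i, j}"
        using assms unfolding simple_graph_def by blast
      show "\<exists>p\<in>P. e = {fst p, snd p}"
      proof (cases "i < j")
        case True then show ?thesis using ij \<open>e \<in> E\<close> by (intro bexI[of _ "(i,j)"]) (auto simp: P_def)
      next
        case False then show ?thesis using ij \<open>e \<in> E\<close>
          by (intro bexI[of _ "(j,i)"]) (auto simp: P_def insert_commute)
      qed
    qed
    then show ?thesis unfolding psi_def by (rule prod.reindex_bij_betw)
  qed
  finally show ?thesis .
qed

lemma transform_entry_TT:
  assumes "simple_graph n E"
  shows "transform_entry n (graph_bf n E) c k = complex_of_real (2 powr (- real n / 2)) * TT n E c k"
  unfolding transform_entry_def TT_def sum_distrib_left graph_bf_psi[OF assms]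
  by (rule sum.cong) (auto simp: algebra_simps)

lemma simple_sub: "simple_graph n E \<Longrightarrow> E \<subseteq> Pow {0..<n}"
  unfolding simple_graph_def by auto

lemma simple_finite: "simple_graph n E \<Longrightarrow> finite E"
  using simple_sub by (meson finite_Pow_iff finite_atLeastLessThan finite_subset)

lemma nbhd_not_self: "simple_graph n E \<Longrightarrow> v \<notin> nbhd E v"
  unfolding simple_graph_def nbhd_def by fastforce

lemma nbhd_sub: "simple_graph n E \<Longrightarrow> nbhd E v \<subseteq> {0..<n}"
  unfolding simple_graph_def nbhd_def by (auto simp: doubleton_eq_iff)

lemma T_eq: "{{u, w} | u w. u \<in> N \<and> w \<in> N \<and> u \<noteq> w} = {e. e \<subseteq> N \<and> card e = 2}"
  by (auto simp: card_2_iff)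

lemma local_compl_alt:
  "local_compl E v = (E - {e. e \<subseteq> nbhd E v \<and> card e = 2}) \<union> ({e. e \<subseteq> nbhd E v \<and> card e = 2} - E)"
  unfolding local_compl_def Let_def T_eq ..

lemma simple_local_compl:
  assumes "simple_graph n E" shows "simple_graph n (local_compl E v)"
  unfolding simple_graph_def
proof
  fix e assume "e \<in> local_compl E v"
  then have "e \<in> E \<or> (e \<subseteq> nbhd E v \<and> card e = 2)" unfolding local_compl_alt by blast
  then show "\<exists>i j. i < n \<and> j < n \<and> i \<noteq> j \<and> e = {i, j}"
  proof
    assume "e \<in> E" then show ?thesis using assms unfolding simple_graph_def by blast
  next
    assume a: "e \<subseteq> nbhd E v \<and> card e = 2"
    then obtain i j where "e = {i, j}" "i \<noteq> j" by (auto simp: card_2_iff)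
    then show ?thesis using a nbhd_sub[OF assms, of v] by (intro exI[of _ i] exI[of _ j]) auto
  qed
qed

lemma nbhd_local_compl:
  assumes "simple_graph n E" shows "nbhd (local_compl E v) v = nbhd E v"
proof -
  have "v \<notin> nbhd E v" using nbhd_not_self[OF assms] .
  then have "\<And>u. \<not> ({u, v} \<subseteq> nbhd E v)" by auto
  then show ?thesis unfolding local_compl_alt nbhd_def by auto
qed

lemma local_compl_invol:
  assumes "simple_graph n E" shows "local_compl (local_compl E v) v = E"
proof -
  define T where "T = {e. e \<subseteq> nbhd E v \<and> card e = 2}"
  have 1: "local_compl E v = (E - T) \<union> (T - E)" unfolding local_compl_alt T_def ..
  have 2: "local_compl (local_compl E v) v = (local_compl E v - T) \<union> (T - local_compl E v)"
    unfolding local_compl_alt[of "local_compl E v"] nbhd_local_compl[OF assms] T_def ..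
  have "local_compl (local_compl E v) v = ((E - T) \<union> (T - E) - T) \<union> (T - ((E - T) \<union> (T - E)))"
    using 2 unfolding 1 .
  then show ?thesis by blast
qed

lemma orbit_simple: "H \<in> lc_orbit n E \<Longrightarrow> simple_graph n E \<Longrightarrow> simple_graph n H"
  by (induction rule: lc_orbit.induct) (auto intro: simple_local_compl)

lemma orbit_trans: "K \<in> lc_orbit n H \<Longrightarrow> H \<in> lc_orbit n E \<Longrightarrow> K \<in> lc_orbit n E"
  by (induction rule: lc_orbit.induct) (auto intro: lc_orbit.step)

lemma orbit_sym: "H \<in> lc_orbit n E \<Longrightarrow> simple_graph n E \<Longrightarrow> E \<in> lc_orbit n H"
proof (induction rule: lc_orbit.induct)
  case refl show ?case by (rule lc_orbit.refl)
next
  case (step H v)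
  have sH: "simple_graph n H" using step orbit_simple by blast
  have "H \<in> lc_orbit n (local_compl H v)"
    using lc_orbit.step[OF lc_orbit.refl[where n=n and E="local_compl H v"] step(2)]
    by (simp add: local_compl_invol[OF sH])
  then show ?case using step orbit_trans by blast
qed

lemma orbit_finite: "simple_graph n E \<Longrightarrow> finite (lc_orbit n E)"
proof -
  assume s: "simple_graph n E"
  have "lc_orbit n E \<subseteq> Pow (Pow {0..<n})"
    using orbit_simple[OF _ s] simple_sub by blast
  then show ?thesis by (rule finite_subset) simp
qed

definition sv :: "nat \<Rightarrow> nat" where "sv c = (if c = 0 then 2 else if c = 1 then 1 else 0)"
definition sn :: "nat \<Rightarrow> nat" where "sn c = (if c = 0 then 0 else if c = 1 then 2 else 1)"
definition kv :: "nat \<Rightarrow> nat \<Rightarrow> nat" where "kv c k = (if c = 0 then 1 - k else k)"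
definition kn :: "nat \<Rightarrow> nat \<Rightarrow> nat" where "kn c k = (if c = 1 then 1 - k else k)"
definition dn :: "nat \<Rightarrow> nat \<Rightarrow> complex" where "dn c k = (if c = 0 \<and> k = 1 then - \<i> else 1)"
definition wv :: "nat \<Rightarrow> nat \<Rightarrow> complex" where
  "wv c k = (if c = 1 then (if k = 0 then 1 else \<i>)
             else (if k = 0 then (1 + \<i>) / complex_of_real (sqrt 2) else (1 - \<i>) / complex_of_real (sqrt 2)))"

lemma sqrt2_sq: "complex_of_real (sqrt 2) * complex_of_real (sqrt 2) = 2"
  unfolding of_real_mult[symmetric] by simp

lemma sqrt2_nz: "complex_of_real (sqrt 2) \<noteq> 0" by simp

lemma nb_local:
  assumes "c \<in> {0,1,2}" "k \<in> {0,1}" "y \<in> {0,1}"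
  shows "mat_IHN c k y = dn c k * mat_IHN (sn c) (kn c k) y * \<i> ^ y"
  using assms by (auto simp: mat_IHN_def dn_def sn_def kn_def field_simps)

lemma v_local:
  assumes "c \<in> {0,1,2}" "k \<in> {0,1}" "p \<in> {0,1}"
  shows "\<i> ^ p * (mat_IHN c k 0 + mat_IHN c k 1 * (-1) ^ p) =
         wv c k * (mat_IHN (sv c) (kv c k) 0 + mat_IHN (sv c) (kv c k) 1 * (-1) ^ p)"
  using assms by (auto simp: mat_IHN_def wv_def sv_def kv_def field_simps sqrt2_sq)

lemma cmod_dn: "cmod (dn c k) = 1" by (simp add: dn_def)

lemma cmod_wv: "cmod (wv c k) = 1"
proof -
  have s: "cmod (complex_of_real (sqrt 2)) = sqrt 2" by simp
  have a: "cmod (1 + \<i>) = sqrt 2" "cmod (1 - \<i>) = sqrt 2" by (simp_all add: cmod_def)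
  have "cmod ((1 + \<i>) / complex_of_real (sqrt 2)) = 1" "cmod ((1 - \<i>) / complex_of_real (sqrt 2)) = 1"
    unfolding norm_divide a s by simp_all
  then show ?thesis unfolding wv_def by simp
qed

lemma cube_iff: "x \<in> cube n \<longleftrightarrow> (\<forall>j<n. x j \<in> {0,1}) \<and> (\<forall>j. j \<ge> n \<longrightarrow> x j = undefined)"
  unfolding cube_def PiE_def extensional_def Pi_def by auto

lemma cube_finite: "finite (cube n)"
  unfolding cube_def by (simp add: finite_PiE)

lemma cube_upd: "x \<in> cube n \<Longrightarrow> v < n \<Longrightarrow> a \<in> {0,1} \<Longrightarrow> x(v := a) \<in> cube n"
  unfolding cube_iff by auto

lemma cube_split:
  assumes "v < n"
  shows "(\<Sum>x\<in>cube n. F x) = (\<Sum>x\<in>{x\<in>cube n. x v = 0}. F x + F (x(v := 1)))"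
proof -
  define C0 where "C0 = {x\<in>cube n. x v = 0}"
  define C1 where "C1 = {x\<in>cube n. x v = 1}"
  have "x v = 0 \<or> x v = 1" if "x \<in> cube n" for x using assms that unfolding cube_iff by auto
  then have un: "cube n = C0 \<union> C1" unfolding C0_def C1_def by auto
  have fin: "finite C0" "finite C1" unfolding C0_def C1_def using cube_finite by auto
  have img: "C1 = (\<lambda>x. x(v := 1)) ` C0"
  proof
    show "C1 \<subseteq> (\<lambda>x. x(v := 1)) ` C0"
    proof
      fix x assume x: "x \<in> C1"
      then have "x(v := 0) \<in> C0" "x = (x(v := 0))(v := 1)"
        using assms cube_upd[of x n v 0] unfolding C0_def C1_def by auto
      then show "x \<in> (\<lambda>x. x(v := 1)) ` C0" by blast
    qed
  next
    show "(\<lambda>x. x(v := 1)) ` C0 \<subseteq> C1"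
      using assms cube_upd unfolding C0_def C1_def by auto
  qed
  have inj: "inj_on (\<lambda>x. x(v := 1)) C0"
  proof (rule inj_onI)
    fix x y assume xy: "x \<in> C0" "y \<in> C0" and eq: "x(v := 1) = y(v := 1)"
    show "x = y"
    proof
      fix j show "x j = y j" using fun_cong[OF eq, of j] xy unfolding C0_def by (cases "j = v") auto
    qed
  qed
  have "(\<Sum>x\<in>cube n. F x) = (\<Sum>x\<in>C0. F x) + (\<Sum>x\<in>C1. F x)"
    unfolding un by (rule sum.union_disjoint[OF fin]) (auto simp: C0_def C1_def)
  also have "(\<Sum>x\<in>C1. F x) = (\<Sum>x\<in>C0. F (x(v := 1)))"
    unfolding img by (rule sum.reindex[OF inj, unfolded comp_def])
  finally show ?thesis unfolding C0_def by (simp add: sum.distrib)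
qed

lemma prod_symdiff:
  fixes g :: "'a \<Rightarrow> complex"
  assumes "finite A" "finite B" "\<And>e. g e * g e = 1"
  shows "prod g ((A - B) \<union> (B - A)) = prod g A * prod g B"
proof -
  have 1: "prod g ((A - B) \<union> (B - A)) = prod g (A - B) * prod g (B - A)"
    by (rule prod.union_disjoint) (use assms in auto)
  have 2: "prod g A = prod g (A \<inter> B) * prod g (A - B)"
    using assms(1) by (rule prod.Int_Diff)
  have 3: "prod g B = prod g (A \<inter> B) * prod g (B - A)"
    using prod.Int_Diff[OF assms(2), of g A] by (simp add: Int_commute)
  have 4: "prod g (A \<inter> B) * prod g (A \<inter> B) = 1"
    by (simp add: prod.distrib[symmetric] assms)
  have "prod g A * prod g B = (prod g (A \<inter> B) * prod g (A \<inter> B)) * (prod g (A - B) * prod g (B - A))"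
    unfolding 2 3 by (simp add: algebra_simps)
  then show ?thesis unfolding 1 4 by simp
qed

definition Tset :: "nat set set \<Rightarrow> nat \<Rightarrow> nat set set" where
  "Tset E v = {e. e \<subseteq> nbhd E v \<and> card e = 2}"

lemma Tset_finite: "simple_graph n E \<Longrightarrow> finite (Tset E v)"
proof -
  assume s: "simple_graph n E"
  have "finite (nbhd E v)" using nbhd_sub[OF s] by (meson finite_atLeastLessThan finite_subset)
  then show ?thesis unfolding Tset_def by (rule rev_finite_subset[OF finite_Pow_iff[THEN iffD2]]) auto
qed

lemma psi_lc:
  assumes "simple_graph n E"
  shows "psi (local_compl E v) y = psi E y * (\<Prod>e\<in>Tset E v. (-1) ^ (\<Prod>i\<in>e. y i))"
  unfolding psi_def local_compl_alt Tset_def[symmetric]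
  by (rule prod_symdiff) (auto simp: simple_finite[OF assms] Tset_finite[OF assms] power_mult_distrib[symmetric])

lemma i_choose: "\<i> ^ w * (-1) ^ (w choose 2) = \<i> ^ (w mod 2)"
proof (induction w)
  case 0 then show ?case by (simp add: numeral_2_eq_2)
next
  case (Suc w)
  have c: "Suc w choose 2 = w + (w choose 2)"
    by (simp add: numeral_2_eq_2)
  have "\<i> ^ Suc w * (-1) ^ (Suc w choose 2) = \<i> * (-1) ^ w * (\<i> ^ w * (-1) ^ (w choose 2))"
    unfolding c by (simp add: power_add algebra_simps)
  also have "\<dots> = \<i> * (-1) ^ w * \<i> ^ (w mod 2)" using Suc by simp
  also have "\<dots> = \<i> ^ (Suc w mod 2)"
    by (cases "even w") (auto simp: mod_Suc minus_one_power_iff odd_iff_mod_2_eq_one even_iff_mod_2_eq_zero)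
  finally show ?case .
qed

lemma prodT:
  fixes y :: "nat \<Rightarrow> nat"
  assumes "finite N" "\<forall>u\<in>N. y u \<in> {0,1}"
  shows "(\<Prod>e\<in>{e. e \<subseteq> N \<and> card e = 2}. (-1::complex) ^ (\<Prod>i\<in>e. y i)) = (-1) ^ ((\<Sum>u\<in>N. y u) choose 2)"
proof -
  define W where "W = {u\<in>N. y u = 1}"
  have fT: "finite {e. e \<subseteq> N \<and> card e = 2}"
    using assms(1) by (rule rev_finite_subset[OF finite_Pow_iff[THEN iffD2]]) auto
  have pe: "(\<Prod>i\<in>e. y i) = (if e \<subseteq> W then 1 else 0)" if h: "e \<subseteq> N" "finite e" for e
  proof (cases "e \<subseteq> W")
    case True then show ?thesis by (simp add: W_def subset_iff)
  next
    case False
    then obtain i where "i \<in> e" "y i \<noteq> 1" using W_def h by auto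
    then have "y i = 0" using assms h by auto
    then show ?thesis using False \<open>i \<in> e\<close> h by auto
  qed
  have "(\<Prod>e\<in>{e. e \<subseteq> N \<and> card e = 2}. (-1::complex) ^ (\<Prod>i\<in>e. y i))
      = (\<Prod>e\<in>{e. e \<subseteq> N \<and> card e = 2}. (if e \<subseteq> W then -1 else 1))"
    by (rule prod.cong) (auto simp: pe card_ge_0_finite)
  also have "\<dots> = (\<Prod>e\<in>{e. e \<subseteq> N \<and> card e = 2} \<inter> {e. e \<subseteq> W}. -1)"
    by (simp add: prod.If_cases fT)
  also have "{e. e \<subseteq> N \<and> card e = 2} \<inter> {e. e \<subseteq> W} = {e. e \<subseteq> W \<and> card e = 2}"
    by (auto simp: W_def)
  also have "(\<Prod>e\<in>{e. e \<subseteq> W \<and> card e = 2}. (-1::complex)) = (-1) ^ (card W choose 2)"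
    using n_subsets[of W 2] assms(1) by (simp add: W_def)
  also have "card W = (\<Sum>u\<in>N. y u)"
  proof -
    have "(\<Sum>u\<in>N. y u) = (\<Sum>u\<in>N. if u \<in> W then 1 else 0)"
      by (rule sum.cong) (use assms in \<open>auto simp: W_def\<close>)
    also have "\<dots> = card W" using assms(1) by (simp add: sum.If_cases W_def Int_def)
    finally show ?thesis by simp
  qed
  finally show ?thesis .
qed

lemma psi_v:
  assumes s: "simple_graph n E" and x0: "x v = 0"
  shows "psi E (x(v := 1)) = psi E x * (-1) ^ (\<Sum>u\<in>nbhd E v. x u)"
proof -
  define Ev where "Ev = {e\<in>E. v \<in> e}"
  have fE: "finite E" using simple_finite[OF s] .
  have sp: "psi E y = (\<Prod>e\<in>E - Ev. (-1) ^ (\<Prod>i\<in>e. y i)) * (\<Prod>e\<in>Ev. (-1) ^ (\<Prod>i\<in>e. y i))" for y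
    unfolding psi_def by (rule prod.subset_diff) (auto simp: Ev_def fE)
  have a: "(\<Prod>e\<in>E - Ev. (-1::complex) ^ (\<Prod>i\<in>e. (x(v := 1)) i)) = (\<Prod>e\<in>E - Ev. (-1) ^ (\<Prod>i\<in>e. x i))"
    by (intro prod.cong refl arg_cong[where f="\<lambda>t. (-1) ^ t"]) (auto simp: Ev_def)
  have b: "(\<Prod>e\<in>Ev. (-1::complex) ^ (\<Prod>i\<in>e. x i)) = 1"
  proof (rule prod.neutral, rule ballI)
    fix e assume "e \<in> Ev"
    then have "v \<in> e" "finite e" using s unfolding Ev_def simple_graph_def by auto
    then have "(\<Prod>i\<in>e. x i) = 0" using x0 by (meson prod_zero_iff)
    then show "(-1::complex) ^ (\<Prod>i\<in>e. x i) = 1" by simp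
  qed
  have bij: "bij_betw (\<lambda>u. {u, v}) (nbhd E v) Ev"
  proof (rule bij_betwI')
    fix u w assume "u \<in> nbhd E v" "w \<in> nbhd E v"
    show "({u, v} = {w, v}) = (u = w)" unfolding doubleton_eq_iff by blast
  next
    fix u assume "u \<in> nbhd E v" then show "{u, v} \<in> Ev" unfolding nbhd_def Ev_def by simp
  next
    fix e assume "e \<in> Ev"
    then have eE: "e \<in> E" "v \<in> e" unfolding Ev_def by auto
    obtain i j where "e = {i, j}" using s eE(1) unfolding simple_graph_def by blast
    then have ij: "e = {i, j}" "v \<in> e" "e \<in> E" using eE by auto
    then have "v = i \<or> v = j" by blast
    then show "\<exists>u\<in>nbhd E v. e = {u, v}"
    proof
      assume "v = i" then show ?thesis using ij by (intro bexI[of _ j]) (auto simp: nbhd_def insert_commute)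
    next
      assume "v = j" then show ?thesis using ij by (intro bexI[of _ i]) (auto simp: nbhd_def)
    qed
  qed
  have c: "(\<Prod>e\<in>Ev. (-1::complex) ^ (\<Prod>i\<in>e. (x(v := 1)) i)) = (\<Prod>u\<in>nbhd E v. (-1) ^ (\<Prod>i\<in>{u, v}. (x(v := 1)) i))"
    using prod.reindex_bij_betw[OF bij, of "\<lambda>e. (-1::complex) ^ (\<Prod>i\<in>e. (x(v := 1)) i)"] by (rule sym)
  also have "\<dots> = (\<Prod>u\<in>nbhd E v. (-1) ^ x u)"
  proof (rule prod.cong[OF HOL.refl])
    fix u assume "u \<in> nbhd E v"
    then have "u \<noteq> v" using nbhd_not_self[OF s] by metis
    then show "(-1::complex) ^ (\<Prod>i\<in>{u, v}. (x(v := 1)) i) = (-1) ^ x u" by simp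
  qed
  also have "\<dots> = (-1) ^ (\<Sum>u\<in>nbhd E v. x u)" by (simp add: power_sum)
  finally show ?thesis using sp[of x] sp[of "x(v := 1)"] a b by simp
qed

definition lcc :: "nat set \<Rightarrow> nat \<Rightarrow> (nat \<Rightarrow> nat) \<Rightarrow> nat \<Rightarrow> nat" where
  "lcc N v c = (\<lambda>j. if j = v then sv (c j) else if j \<in> N then sn (c j) else c j)"

definition lck :: "nat set \<Rightarrow> nat \<Rightarrow> (nat \<Rightarrow> nat) \<Rightarrow> (nat \<Rightarrow> nat) \<Rightarrow> nat \<Rightarrow> nat" where
  "lck N v c k = (\<lambda>j. if j = v then kv (c j) (k j) else if j \<in> N then kn (c j) (k j) else k j)"

abbreviation CS :: "nat \<Rightarrow> (nat \<Rightarrow> nat) set" where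
  "CS n \<equiv> Pi\<^sub>E {0..<n} (\<lambda>_. {0, 1, 2})"

lemma CS_iff: "c \<in> CS n \<longleftrightarrow> (\<forall>j<n. c j \<in> {0,1,2}) \<and> (\<forall>j. j \<ge> n \<longrightarrow> c j = undefined)"
  unfolding PiE_def extensional_def Pi_def by auto

lemma lcc_CS: "c \<in> CS n \<Longrightarrow> v < n \<Longrightarrow> N \<subseteq> {0..<n} \<Longrightarrow> lcc N v c \<in> CS n"
  unfolding CS_iff lcc_def sv_def sn_def by auto

lemma lck_cube: "k \<in> cube n \<Longrightarrow> v < n \<Longrightarrow> N \<subseteq> {0..<n} \<Longrightarrow> lck N v c k \<in> cube n"
  unfolding cube_iff lck_def kv_def kn_def by auto

lemma prod_remove_v:
  fixes n v :: nat
  assumes "v < n"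
  shows "(\<Prod>j<n. mat_IHN (c j) (k j) ((x(v := a)) j)) =
         mat_IHN (c v) (k v) a * (\<Prod>j\<in>{..<n} - {v}. mat_IHN (c j) (k j) (x j))"
proof -
  have "(\<Prod>j<n. mat_IHN (c j) (k j) ((x(v := a)) j)) =
        mat_IHN (c v) (k v) ((x(v := a)) v) * (\<Prod>j\<in>{..<n} - {v}. mat_IHN (c j) (k j) ((x(v := a)) j))"
    using assms by (intro prod.remove) auto
  also have "(\<Prod>j\<in>{..<n} - {v}. mat_IHN (c j) (k j) ((x(v := a)) j)) =
             (\<Prod>j\<in>{..<n} - {v}. mat_IHN (c j) (k j) (x j))"
    by (rule prod.cong) auto
  finally show ?thesis by simp
qed

lemma R_nb:
  assumes s: "simple_graph n E" and v: "v < n" and c: "c \<in> CS n" and k: "k \<in> cube n"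
    and x: "x \<in> cube n"
  shows "(\<Prod>j\<in>{..<n} - {v}. mat_IHN (c j) (k j) (x j)) =
         (\<Prod>u\<in>nbhd E v. dn (c u) (k u)) *
         (\<Prod>j\<in>{..<n} - {v}. mat_IHN (lcc (nbhd E v) v c j) (lck (nbhd E v) v c k j) (x j)) *
         \<i> ^ (\<Sum>u\<in>nbhd E v. x u)"
proof -
  define N where "N = nbhd E v"
  have NA: "N \<subseteq> {..<n} - {v}" using nbhd_sub[OF s, of v] nbhd_not_self[OF s, of v] unfolding N_def by auto
  have "(\<Prod>j\<in>{..<n} - {v}. mat_IHN (c j) (k j) (x j)) =
        (\<Prod>j\<in>{..<n} - {v}. (if j \<in> N then dn (c j) (k j) * \<i> ^ x j else 1) *
            mat_IHN (lcc N v c j) (lck N v c k j) (x j))"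
  proof (rule prod.cong[OF HOL.refl])
    fix j assume j: "j \<in> {..<n} - {v}"
    have cj: "c j \<in> {0,1,2}" using c j unfolding CS_iff by auto
    have kj: "k j \<in> {0,1}" using k j unfolding cube_iff by auto
    have xj: "x j \<in> {0,1}" using x j unfolding cube_iff by auto
    show "mat_IHN (c j) (k j) (x j) = (if j \<in> N then dn (c j) (k j) * \<i> ^ x j else 1) *
            mat_IHN (lcc N v c j) (lck N v c k j) (x j)"
      using j nb_local[OF cj kj xj] by (auto simp: lcc_def lck_def)
  qed
  also have "\<dots> = (\<Prod>j\<in>{..<n} - {v}. (if j \<in> N then dn (c j) (k j) * \<i> ^ x j else 1)) *
            (\<Prod>j\<in>{..<n} - {v}. mat_IHN (lcc N v c j) (lck N v c k j) (x j))"
    by (rule prod.distrib)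
  also have "(\<Prod>j\<in>{..<n} - {v}. (if j \<in> N then dn (c j) (k j) * \<i> ^ x j else 1)) =
             (\<Prod>j\<in>N. dn (c j) (k j) * \<i> ^ x j)"
  proof -
    have "(\<Prod>j\<in>{..<n} - {v}. (if j \<in> N then dn (c j) (k j) * \<i> ^ x j else 1)) =
          (\<Prod>j\<in>({..<n} - {v}) \<inter> {j. j \<in> N}. dn (c j) (k j) * \<i> ^ x j) * (\<Prod>j\<in>({..<n} - {v}) \<inter> - {j. j \<in> N}. 1)"
      by (rule prod.If_cases) simp
    also have "({..<n} - {v}) \<inter> {j. j \<in> N} = N" using NA by auto
    finally show ?thesis by simp
  qed
  also have "(\<Prod>j\<in>N. dn (c j) (k j) * \<i> ^ x j) = (\<Prod>j\<in>N. dn (c j) (k j)) * \<i> ^ (\<Sum>u\<in>N. x u)"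
    by (simp add: prod.distrib power_sum)
  finally show ?thesis unfolding N_def by (simp add: algebra_simps)
qed

lemma TT_lc:
  assumes s: "simple_graph n E" and v: "v < n" and c: "c \<in> CS n" and k: "k \<in> cube n"
  shows "TT n (local_compl E v) c k =
         (wv (c v) (k v) * (\<Prod>u\<in>nbhd E v. dn (c u) (k u))) *
         TT n E (lcc (nbhd E v) v c) (lck (nbhd E v) v c k)"
proof -
  define N where "N = nbhd E v"
  define c' where "c' = lcc N v c"
  define k' where "k' = lck N v c k"
  define F where "F = local_compl E v"
  define D where "D = (\<Prod>u\<in>N. dn (c u) (k u))"
  define \<omega> where "\<omega> = wv (c v) (k v) * D"
  define R where "R = (\<lambda>c k x. (\<Prod>j\<in>{..<n} - {v}. mat_IHN (c j) (k j) (x j)))"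
  define w where "w = (\<lambda>x::nat\<Rightarrow>nat. \<Sum>u\<in>N. x u)"
  have finN: "finite N" using nbhd_sub[OF s, of v] unfolding N_def by (meson finite_atLeastLessThan finite_subset)
  have cv: "c v \<in> {0,1,2}" using c v unfolding CS_iff by auto
  have kv: "k v \<in> {0,1}" using k v unfolding cube_iff by auto
  have c'v: "c' v = sv (c v)" "k' v = kv (c v) (k v)" unfolding c'_def k'_def lcc_def lck_def by auto
  have key: "(\<Prod>j<n. mat_IHN (c j) (k j) (x j)) * psi F x +
             (\<Prod>j<n. mat_IHN (c j) (k j) ((x(v := 1)) j)) * psi F (x(v := 1)) =
             \<omega> * ((\<Prod>j<n. mat_IHN (c' j) (k' j) (x j)) * psi E x +
             (\<Prod>j<n. mat_IHN (c' j) (k' j) ((x(v := 1)) j)) * psi E (x(v := 1)))"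
    if x: "x \<in> cube n" and x0: "x v = 0" for x
  proof -
    have xx: "x = x(v := 0)" using x0 by auto
    have M0: "(\<Prod>j<n. mat_IHN (c j) (k j) (x j)) = mat_IHN (c v) (k v) 0 * R c k x"
      "(\<Prod>j<n. mat_IHN (c' j) (k' j) (x j)) = mat_IHN (c' v) (k' v) 0 * R c' k' x"
      using prod_remove_v[OF v, of c k x 0] prod_remove_v[OF v, of c' k' x 0] xx unfolding R_def by simp_all
    have M1: "(\<Prod>j<n. mat_IHN (c j) (k j) ((x(v := 1)) j)) = mat_IHN (c v) (k v) 1 * R c k x"
      "(\<Prod>j<n. mat_IHN (c' j) (k' j) ((x(v := 1)) j)) = mat_IHN (c' v) (k' v) 1 * R c' k' x"
      using prod_remove_v[OF v, of c k x 1] prod_remove_v[OF v, of c' k' x 1] unfolding R_def by simp_all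
    have RR: "R c k x = D * R c' k' x * \<i> ^ w x"
      using R_nb[OF s v c k x] unfolding R_def D_def c'_def k'_def w_def N_def by simp
    have xN: "\<forall>u\<in>N. x u \<in> {0,1}"
    proof
      fix u assume "u \<in> N"
      then have "u < n" using nbhd_sub[OF s, of v] unfolding N_def by auto
      then show "x u \<in> {0,1}" using x unfolding cube_iff by blast
    qed
    have PT: "(\<Prod>e\<in>Tset E v. (-1) ^ (\<Prod>i\<in>e. x i)) = (-1::complex) ^ (w x choose 2)"
      using prodT[OF finN xN] unfolding Tset_def N_def w_def by simp
    have PT1: "(\<Prod>e\<in>Tset E v. (-1::complex) ^ (\<Prod>i\<in>e. (x(v := 1)) i)) = (\<Prod>e\<in>Tset E v. (-1) ^ (\<Prod>i\<in>e. x i))"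
    proof (rule prod.cong[OF HOL.refl])
      fix e assume "e \<in> Tset E v"
      then have "v \<notin> e" using nbhd_not_self[OF s, of v] unfolding Tset_def by auto
      then have "(\<Prod>i\<in>e. (x(v := 1)) i) = (\<Prod>i\<in>e. x i)" by (intro prod.cong) auto
      then show "(-1::complex) ^ (\<Prod>i\<in>e. (x(v := 1)) i) = (-1) ^ (\<Prod>i\<in>e. x i)" by simp
    qed
    have pF0: "psi F x = psi E x * (-1) ^ (w x choose 2)"
      using psi_lc[OF s, of v x] PT unfolding F_def by simp
    have pE1: "psi E (x(v := 1)) = psi E x * (-1) ^ w x"
      using psi_v[where x=x and v=v, OF s x0] unfolding w_def N_def by simp
    have pF1: "psi F (x(v := 1)) = psi E x * (-1) ^ w x * (-1) ^ (w x choose 2)"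
      using psi_lc[OF s, of v "x(v := 1)"] PT PT1 pE1 unfolding F_def by simp
    have p2: "w x mod 2 \<in> {0,1}" by auto
    have m1: "(-1::complex) ^ w x = (-1) ^ (w x mod 2)" by (simp add: minus_one_power_iff)
    have VL: "\<i> ^ (w x mod 2) * (mat_IHN (c v) (k v) 0 + mat_IHN (c v) (k v) 1 * (-1) ^ (w x mod 2)) =
         wv (c v) (k v) * (mat_IHN (c' v) (k' v) 0 + mat_IHN (c' v) (k' v) 1 * (-1) ^ (w x mod 2))"
      unfolding c'v by (rule v_local[OF cv kv p2])
    have "(\<Prod>j<n. mat_IHN (c j) (k j) (x j)) * psi F x +
             (\<Prod>j<n. mat_IHN (c j) (k j) ((x(v := 1)) j)) * psi F (x(v := 1))
       = D * R c' k' x * psi E x * ((\<i> ^ w x * (-1) ^ (w x choose 2)) *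
            (mat_IHN (c v) (k v) 0 + mat_IHN (c v) (k v) 1 * (-1) ^ w x))"
      unfolding M0 M1 pF0 pF1 RR by (simp add: algebra_simps)
    also have "\<dots> = D * R c' k' x * psi E x * (\<i> ^ (w x mod 2) *
            (mat_IHN (c v) (k v) 0 + mat_IHN (c v) (k v) 1 * (-1) ^ (w x mod 2)))"
      unfolding i_choose m1 ..
    also have "\<dots> = D * R c' k' x * psi E x * (wv (c v) (k v) *
            (mat_IHN (c' v) (k' v) 0 + mat_IHN (c' v) (k' v) 1 * (-1) ^ (w x mod 2)))"
      unfolding VL ..
    also have "\<dots> = \<omega> * ((\<Prod>j<n. mat_IHN (c' j) (k' j) (x j)) * psi E x +
             (\<Prod>j<n. mat_IHN (c' j) (k' j) ((x(v := 1)) j)) * psi E (x(v := 1)))"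
      unfolding M0 M1 pE1 \<omega>_def m1[symmetric] by (simp add: algebra_simps)
    finally show ?thesis .
  qed
  have "TT n F c k = (\<Sum>x\<in>{x\<in>cube n. x v = 0}.
          (\<Prod>j<n. mat_IHN (c j) (k j) (x j)) * psi F x +
          (\<Prod>j<n. mat_IHN (c j) (k j) ((x(v := 1)) j)) * psi F (x(v := 1)))"
    unfolding TT_def by (rule cube_split[OF v])
  also have "\<dots> = (\<Sum>x\<in>{x\<in>cube n. x v = 0}. \<omega> * ((\<Prod>j<n. mat_IHN (c' j) (k' j) (x j)) * psi E x +
             (\<Prod>j<n. mat_IHN (c' j) (k' j) ((x(v := 1)) j)) * psi E (x(v := 1))))"
    by (rule sum.cong[OF HOL.refl], rule key) auto
  also have "\<dots> = \<omega> * TT n E c' k'"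
    unfolding TT_def cube_split[OF v] sum_distrib_left ..
  finally show ?thesis unfolding F_def \<omega>_def D_def N_def c'_def k'_def .
qed

lemma cmod_TT_lc:
  assumes s: "simple_graph n E" and v: "v < n" and c: "c \<in> CS n" and k: "k \<in> cube n"
  shows "cmod (TT n (local_compl E v) c k) = cmod (TT n E (lcc (nbhd E v) v c) (lck (nbhd E v) v c k))"
proof -
  have "cmod (\<Prod>u\<in>nbhd E v. dn (c u) (k u)) = 1"
    unfolding prod_norm[symmetric] cmod_dn by simp
  then show ?thesis unfolding TT_lc[OF assms] norm_mult cmod_wv by simp
qed

lemma cmod_psi: "cmod (psi E x) = 1"
  unfolding psi_def prod_norm[symmetric] by (simp add: norm_power)

lemma sum_cube_prod:
  fixes g :: "nat \<Rightarrow> nat \<Rightarrow> 'a::comm_semiring_1"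
  shows "(\<Sum>x\<in>cube n. \<Prod>j<n. g j (x j)) = (\<Prod>j<n. g j 0 + g j 1)"
proof -
  have "(\<Prod>j\<in>{0..<n}. \<Sum>a\<in>{0,1}. g j a) = (\<Sum>x\<in>cube n. \<Prod>j\<in>{0..<n}. g j (x j))"
    unfolding cube_def by (rule prod_sum_PiE) auto
  then show ?thesis by (simp add: atLeast0LessThan)
qed

definition Wc :: "nat \<Rightarrow> (nat \<Rightarrow> nat) \<Rightarrow> nat set" where
  "Wc n c = {j. j < n \<and> c j \<noteq> 0}"

lemma trivial_bound:
  assumes c: "c \<in> CS n" and k: "k \<in> cube n"
  shows "(cmod (TT n E c k))\<^sup>2 \<le> 2 ^ card (Wc n c)"
proof -
  have "cmod (TT n E c k) \<le> (\<Sum>x\<in>cube n. cmod ((\<Prod>j<n. mat_IHN (c j) (k j) (x j)) * psi E x))"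
    unfolding TT_def by (rule norm_sum)
  also have "\<dots> = (\<Sum>x\<in>cube n. \<Prod>j<n. cmod (mat_IHN (c j) (k j) (x j)))"
    unfolding norm_mult cmod_psi prod_norm by simp
  also have "\<dots> = (\<Prod>j<n. cmod (mat_IHN (c j) (k j) 0) + cmod (mat_IHN (c j) (k j) 1))"
    by (rule sum_cube_prod)
  also have "\<dots> = (\<Prod>j<n. if c j = 0 then 1 else sqrt 2)"
  proof (rule prod.cong[OF HOL.refl])
    fix j assume "j \<in> {..<n}"
    then have cj: "c j \<in> {0,1,2}" and kj: "k j \<in> {0,1}" using c k unfolding CS_iff cube_iff by auto
    have s2: "2 / sqrt 2 = sqrt 2" by (simp add: real_div_sqrt)
    show "cmod (mat_IHN (c j) (k j) 0) + cmod (mat_IHN (c j) (k j) 1) = (if c j = 0 then 1 else sqrt 2)"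
      using cj kj by (auto simp: mat_IHN_def norm_divide s2)
  qed
  also have "\<dots> = sqrt 2 ^ card (Wc n c)"
  proof -
    have "(\<Prod>j<n. if c j = 0 then 1 else sqrt 2) = (\<Prod>j\<in>{..<n} \<inter> {j. c j \<noteq> 0}. sqrt 2)"
      by (simp add: prod.If_cases Int_def)
    also have "{..<n} \<inter> {j. c j \<noteq> 0} = Wc n c" unfolding Wc_def by auto
    finally show ?thesis by simp
  qed
  finally have "cmod (TT n E c k) \<le> sqrt 2 ^ card (Wc n c)" .
  then have "(cmod (TT n E c k))\<^sup>2 \<le> (sqrt 2 ^ card (Wc n c))\<^sup>2"
    by (rule power_mono) simp
  also have "\<dots> = 2 ^ card (Wc n c)"
    by (simp add: power_mult_distrib[symmetric] power_mult[symmetric] mult.commute power_mult)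
  finally show ?thesis .
qed

lemma sqrt2_pow_sq: "(sqrt 2 ^ m)\<^sup>2 = (2::real) ^ m"
proof -
  have "(sqrt 2 ^ m)\<^sup>2 = (sqrt 2 * sqrt 2) ^ m" unfolding power2_eq_square power_mult_distrib ..
  then show ?thesis by simp
qed

lemma lower_bound:
  assumes s: "simple_graph n K" and S: "independent_set n K S"
  shows "\<exists>c\<in>CS n. \<exists>k\<in>cube n. (cmod (TT n K c k))\<^sup>2 = 2 ^ card S"
proof -
  define c :: "nat \<Rightarrow> nat" where "c = (\<lambda>j. if j < n then (if j \<in> S then 1 else 0) else undefined)"
  define k :: "nat \<Rightarrow> nat" where "k = (\<lambda>j. if j < n then 0 else undefined)"
  have cC: "c \<in> CS n" unfolding CS_iff c_def by auto
  have kC: "k \<in> cube n" unfolding cube_iff k_def by auto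
  have Sn: "S \<subseteq> {0..<n}" and Si: "\<forall>u\<in>S. \<forall>w\<in>S. {u, w} \<notin> K"
    using S unfolding independent_set_def by auto
  have pt: "(\<Prod>j<n. mat_IHN (c j) (k j) (x j)) * psi K x = (\<Prod>j<n. mat_IHN (c j) (k j) (x j))"
    if x: "x \<in> cube n" for x
  proof (cases "\<forall>j<n. j \<notin> S \<longrightarrow> x j = 0")
    case True
    have "psi K x = 1" unfolding psi_def
    proof (rule prod.neutral, rule ballI)
      fix e assume "e \<in> K"
      then obtain a b where ab: "a < n" "b < n" "a \<noteq> b" "e = {a, b}" using s unfolding simple_graph_def by blast
      then have "a \<notin> S \<or> b \<notin> S" using Si \<open>e \<in> K\<close> by blast
      then have "x a = 0 \<or> x b = 0" using True ab by auto
      then show "(-1::complex) ^ (\<Prod>i\<in>e. x i) = 1" using ab by auto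
    qed
    then show ?thesis by simp
  next
    case False
    then obtain j where j: "j < n" "j \<notin> S" "x j \<noteq> 0" by blast
    have "mat_IHN (c j) (k j) (x j) = 0" using j unfolding c_def k_def mat_IHN_def by auto
    then have "(\<Prod>j<n. mat_IHN (c j) (k j) (x j)) = 0" using j by (auto intro!: prod_zero)
    then show ?thesis by simp
  qed
  have "TT n K c k = (\<Sum>x\<in>cube n. \<Prod>j<n. mat_IHN (c j) (k j) (x j))"
    unfolding TT_def by (rule sum.cong[OF HOL.refl]) (rule pt)
  also have "\<dots> = (\<Prod>j<n. mat_IHN (c j) (k j) 0 + mat_IHN (c j) (k j) 1)"
    by (rule sum_cube_prod)
  also have "\<dots> = (\<Prod>j<n. if j \<in> S then complex_of_real (sqrt 2) else 1)"
  proof (rule prod.cong[OF HOL.refl])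
    fix j assume "j \<in> {..<n}"
    have s2: "2 / complex_of_real (sqrt 2) = complex_of_real (sqrt 2)"
      using sqrt2_sq sqrt2_nz by (simp add: divide_eq_eq)
    show "mat_IHN (c j) (k j) 0 + mat_IHN (c j) (k j) 1 = (if j \<in> S then complex_of_real (sqrt 2) else 1)"
      using \<open>j \<in> {..<n}\<close> by (auto simp: c_def k_def mat_IHN_def s2 add_divide_distrib[symmetric])
  qed
  also have "\<dots> = complex_of_real (sqrt 2) ^ card S"
  proof -
    have "(\<Prod>j<n. if j \<in> S then complex_of_real (sqrt 2) else 1) = (\<Prod>j\<in>{..<n} \<inter> {j. j \<in> S}. complex_of_real (sqrt 2))"
      by (simp add: prod.If_cases Int_def)
    also have "{..<n} \<inter> {j. j \<in> S} = S" using Sn by auto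
    finally show ?thesis by simp
  qed
  finally have "(cmod (TT n K c k))\<^sup>2 = (sqrt 2 ^ card S)\<^sup>2" by (simp add: norm_power)
  also have "\<dots> = 2 ^ card S" by (rule sqrt2_pow_sq)
  finally show ?thesis using cC kC by blast
qed

lemma orbit_transfer:
  assumes "K \<in> lc_orbit n G" "simple_graph n G"
  shows "\<forall>c\<in>CS n. \<forall>k\<in>cube n. \<exists>c'\<in>CS n. \<exists>k'\<in>cube n. cmod (TT n K c k) = cmod (TT n G c' k')"
  using assms
proof (induction rule: lc_orbit.induct)
  case refl then show ?case by blast
next
  case (step H v)
  have sH: "simple_graph n H" using orbit_simple step by blast
  show ?case
  proof (intro ballI)
    fix c k assume c: "c \<in> CS n" and k: "k \<in> cube n"
    have "cmod (TT n (local_compl H v) c k) = cmod (TT n H (lcc (nbhd H v) v c) (lck (nbhd H v) v c k))"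
      by (rule cmod_TT_lc[OF sH step(2) c k])
    moreover have "lcc (nbhd H v) v c \<in> CS n" "lck (nbhd H v) v c k \<in> cube n"
      using lcc_CS[OF c step(2) nbhd_sub[OF sH]] lck_cube[OF k step(2) nbhd_sub[OF sH]] by auto
    ultimately show "\<exists>c'\<in>CS n. \<exists>k'\<in>cube n. cmod (TT n (local_compl H v) c k) = cmod (TT n G c' k')"
      using step(3)[OF step(4)] by metis
  qed
qed

lemma lcc_nz:
  assumes c: "c \<in> CS n" and j: "j < n" "j \<noteq> v"
  shows "(lcc N v c j \<noteq> 0) = (c j \<noteq> 0)"
  using c j unfolding CS_iff lcc_def sn_def by auto

lemma Wc_finite: "finite (Wc n c)" unfolding Wc_def by simp

lemma UB_aux:
  "card (Wc n c) = m \<Longrightarrow> simple_graph n E \<Longrightarrow> c \<in> CS n \<Longrightarrow> k \<in> cube n \<Longrightarrow>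
   \<exists>K\<in>lc_orbit n E. \<exists>S. independent_set n K S \<and> S \<subseteq> Wc n c \<and> (cmod (TT n E c k))\<^sup>2 \<le> 2 ^ card S"
proof (induction m arbitrary: E c k rule: less_induct)
  case (less m)
  have Ncase: "\<exists>K\<in>lc_orbit n E. \<exists>S. independent_set n K S \<and> S \<subseteq> Wc n c \<and> (cmod (TT n E c k))\<^sup>2 \<le> 2 ^ card S"
    if m: "card (Wc n c) = m" and s: "simple_graph n E" and c: "c \<in> CS n" and k: "k \<in> cube n"
      and v: "v < n" and cv: "c v = 2" for E c k v
  proof -
    define E1 where "E1 = local_compl E v"
    have s1: "simple_graph n E1" unfolding E1_def by (rule simple_local_compl[OF s])
    have EE: "local_compl E1 v = E" unfolding E1_def by (rule local_compl_invol[OF s])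
    define c' where "c' = lcc (nbhd E1 v) v c"
    define k' where "k' = lck (nbhd E1 v) v c k"
    have c': "c' \<in> CS n" unfolding c'_def by (rule lcc_CS[OF c v nbhd_sub[OF s1]])
    have k': "k' \<in> cube n" unfolding k'_def by (rule lck_cube[OF k v nbhd_sub[OF s1]])
    have eq: "cmod (TT n E c k) = cmod (TT n E1 c' k')"
      using cmod_TT_lc[OF s1 v c k] unfolding EE c'_def k'_def .
    have W': "Wc n c' = Wc n c - {v}"
    proof -
      have "c' v = 0" unfolding c'_def lcc_def sv_def using cv by simp
      then have "v \<notin> Wc n c'" unfolding Wc_def by simp
      moreover have "j \<in> Wc n c' \<longleftrightarrow> j \<in> Wc n c" if "j \<noteq> v" for j
        using lcc_nz[OF c _ that] unfolding Wc_def c'_def by auto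
      ultimately show ?thesis by (intro set_eqI) (metis Diff_iff singletonD singletonI)
    qed
    have vW: "v \<in> Wc n c" unfolding Wc_def using v cv by simp
    have lt: "card (Wc n c') < m" unfolding W' m[symmetric] using vW Wc_finite[of n c]
      by (rule card_Diff1_less[rotated])
    obtain K S where K: "K \<in> lc_orbit n E1" and S: "independent_set n K S" "S \<subseteq> Wc n c'"
      "(cmod (TT n E1 c' k'))\<^sup>2 \<le> 2 ^ card S"
      using less.IH[OF lt HOL.refl s1 c' k'] by blast
    have "E1 \<in> lc_orbit n E" unfolding E1_def by (rule lc_orbit.step[OF lc_orbit.refl v])
    then have "K \<in> lc_orbit n E" using K orbit_trans by blast
    then show ?thesis using S eq W' by (intro bexI[of _ K] exI[of _ S]) auto
  qed
  note P = less.prems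
  show ?case
  proof (cases "\<forall>u\<in>Wc n c. \<forall>w\<in>Wc n c. {u, w} \<notin> E")
    case True
    have "independent_set n E (Wc n c)" unfolding independent_set_def using True by (auto simp: Wc_def)
    then show ?thesis using trivial_bound[OF P(3,4)] lc_orbit.refl by blast
  next
    case False
    then obtain u w where u: "u \<in> Wc n c" "w \<in> Wc n c" "{u, w} \<in> E" by blast
    show ?thesis
    proof (cases "\<exists>v\<in>Wc n c. c v = 2")
      case True
      then obtain v where "v \<in> Wc n c" "c v = 2" by blast
      then show ?thesis using Ncase[OF P(1,2,3,4)] unfolding Wc_def by blast
    next
      case False
      have un: "u < n" "w < n" using u unfolding Wc_def by auto
      have "c u \<in> {0,1,2}" "c w \<in> {0,1,2}" using P(3) un unfolding CS_iff by auto
      moreover have "c u \<noteq> 0" "c w \<noteq> 0" using u unfolding Wc_def by auto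
      moreover have "c u \<noteq> 2" "c w \<noteq> 2" using u False by auto
      ultimately have cu: "c u = 1" "c w = 1" by auto
      have uw: "u \<noteq> w"
      proof
        assume "u = w"
        then have "{u} \<in> E" using u by simp
        then show False using P(2) unfolding simple_graph_def by (auto simp: doubleton_eq_iff)
      qed
      define E1 where "E1 = local_compl E u"
      have s1: "simple_graph n E1" unfolding E1_def by (rule simple_local_compl[OF P(2)])
      have EE: "local_compl E1 u = E" unfolding E1_def by (rule local_compl_invol[OF P(2)])
      have NN: "nbhd E1 u = nbhd E u" unfolding E1_def by (rule nbhd_local_compl[OF P(2)])
      define c' where "c' = lcc (nbhd E1 u) u c"
      define k' where "k' = lck (nbhd E1 u) u c k"
      have c': "c' \<in> CS n" unfolding c'_def by (rule lcc_CS[OF P(3) un(1) nbhd_sub[OF s1]])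
      have k': "k' \<in> cube n" unfolding k'_def by (rule lck_cube[OF P(4) un(1) nbhd_sub[OF s1]])
      have eq: "cmod (TT n E c k) = cmod (TT n E1 c' k')"
        using cmod_TT_lc[OF s1 un(1) P(3) P(4)] unfolding EE c'_def k'_def .
      have "w \<in> nbhd E u" unfolding nbhd_def using u(3) by (simp add: insert_commute)
      then have wN: "w \<in> nbhd E1 u" using NN by simp
      have c'w: "c' w = 2" unfolding c'_def lcc_def using wN uw cu by (simp add: sn_def)
      have W': "Wc n c' = Wc n c"
      proof -
        have "c' u = 1" unfolding c'_def lcc_def sv_def using cu by simp
        then have "u \<in> Wc n c' \<longleftrightarrow> u \<in> Wc n c" using cu un unfolding Wc_def by simp
        moreover have "j \<in> Wc n c' \<longleftrightarrow> j \<in> Wc n c" if "j \<noteq> u" for j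
          using lcc_nz[OF P(3) _ that] unfolding Wc_def c'_def by auto
        ultimately show ?thesis by (intro set_eqI) metis
      qed
      obtain K S where K: "K \<in> lc_orbit n E1" and S: "independent_set n K S" "S \<subseteq> Wc n c'"
        "(cmod (TT n E1 c' k'))\<^sup>2 \<le> 2 ^ card S"
        using Ncase[OF _ s1 c' k' un(2) c'w] W' P(1) by metis
      have "E1 \<in> lc_orbit n E" unfolding E1_def by (rule lc_orbit.step[OF lc_orbit.refl un(1)])
      then have "K \<in> lc_orbit n E" using K orbit_trans by blast
      then show ?thesis using S eq W' by (intro bexI[of _ K] exI[of _ S]) auto
    qed
  qed
qed

lemma powr_sq: "(2 powr (- real n / 2))\<^sup>2 = 1 / (2::real) ^ n"
proof -
  have "(2 powr (- real n / 2))\<^sup>2 = 2 powr (- real n / 2 + - real n / 2)"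
    unfolding power2_eq_square powr_add ..
  also have "- real n / 2 + - real n / 2 = - real n" by simp
  also have "(2::real) powr (- real n) = 1 / 2 ^ n"
    by (simp add: powr_minus powr_realpow divide_inverse)
  finally show ?thesis .
qed

lemma te_sq:
  assumes "simple_graph n E"
  shows "(cmod (transform_entry n (graph_bf n E) c k))\<^sup>2 = (cmod (TT n E c k))\<^sup>2 / 2 ^ n"
proof -
  have a: "cmod (complex_of_real (2 powr (- real n / 2))) = 2 powr (- real n / 2)" by simp
  show ?thesis unfolding transform_entry_TT[OF assms] norm_mult a power_mult_distrib powr_sq by simp
qed

lemma indep_facts:
  shows "\<exists>S. independent_set n K S \<and> card S = independence_number n K"
    and "independent_set n K S \<Longrightarrow> card S \<le> independence_number n K"
proof -
  define A where "A = {card S | S. independent_set n K S}"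
  have fin: "finite A"
  proof (rule finite_subset)
    show "A \<subseteq> {0..n}" unfolding A_def independent_set_def
      using card_mono[of "{0..<n}"] by fastforce
  qed simp
  have ne: "A \<noteq> {}" unfolding A_def independent_set_def by auto
  show "\<exists>S. independent_set n K S \<and> card S = independence_number n K"
    using Max_in[OF fin ne] unfolding independence_number_def A_def[symmetric] by (auto simp: A_def)
  show "independent_set n K S \<Longrightarrow> card S \<le> independence_number n K"
    using Max_ge[OF fin] unfolding independence_number_def A_def[symmetric] by (auto simp: A_def)
qed

lemma lambda_facts:
  assumes "simple_graph n E"
  shows "\<exists>K\<in>lc_orbit n E. independence_number n K = lc_lambda n E"
    and "K \<in> lc_orbit n E \<Longrightarrow> independence_number n K \<le> lc_lambda n E"
proof -
  have fin: "finite (independence_number n ` lc_orbit n E)" using orbit_finite[OF assms] by simp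
  have ne: "independence_number n ` lc_orbit n E \<noteq> {}" using lc_orbit.refl by blast
  show "\<exists>K\<in>lc_orbit n E. independence_number n K = lc_lambda n E"
    using Max_in[OF fin ne] unfolding lc_lambda_def by auto
  show "K \<in> lc_orbit n E \<Longrightarrow> independence_number n K \<le> lc_lambda n E"
    using Max_ge[OF fin] unfolding lc_lambda_def by auto
qed

lemma PAR_eq:
  assumes s: "simple_graph n E"
  shows "PAR_IHN n (graph_bf n E) = 2 ^ lc_lambda n E"
proof -
  define L where "L = lc_lambda n E"
  define A where "A = {(cmod (transform_entry n (graph_bf n E) c k))\<^sup>2 | c k. c \<in> CS n \<and> k \<in> cube n}"
  have finA: "finite A"
  proof -
    have "A = (\<lambda>(c, k). (cmod (transform_entry n (graph_bf n E) c k))\<^sup>2) ` (CS n \<times> cube n)"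
      unfolding A_def by auto
    then show ?thesis by (simp add: finite_PiE cube_finite)
  qed
  have ub: "y \<le> 2 ^ L / 2 ^ n" if "y \<in> A" for y
  proof -
    obtain c k where ck: "c \<in> CS n" "k \<in> cube n" "y = (cmod (TT n E c k))\<^sup>2 / 2 ^ n"
      using \<open>y \<in> A\<close> unfolding A_def te_sq[OF s] by blast
    obtain K S where K: "K \<in> lc_orbit n E" "independent_set n K S" "(cmod (TT n E c k))\<^sup>2 \<le> 2 ^ card S"
      using UB_aux[OF HOL.refl s ck(1,2)] by blast
    have "card S \<le> L" using indep_facts(2)[OF K(2)] lambda_facts(2)[OF s K(1)] unfolding L_def by simp
    then have "(2::real) ^ card S \<le> 2 ^ L" by simp
    then have "(cmod (TT n E c k))\<^sup>2 \<le> 2 ^ L" using K(3) by linarith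
    then show ?thesis using ck(3) by (simp add: divide_right_mono)
  qed
  have att: "2 ^ L / 2 ^ n \<in> A"
  proof -
    obtain K where K: "K \<in> lc_orbit n E" "independence_number n K = L"
      using lambda_facts(1)[OF s] unfolding L_def by blast
    obtain S where S: "independent_set n K S" "card S = L" using indep_facts(1)[of n K] K(2) by auto
    have sK: "simple_graph n K" using orbit_simple[OF K(1) s] .
    obtain c k where ck: "c \<in> CS n" "k \<in> cube n" "(cmod (TT n K c k))\<^sup>2 = 2 ^ card S"
      using lower_bound[OF sK S(1)] by blast
    obtain c' k' where ck': "c' \<in> CS n" "k' \<in> cube n" "cmod (TT n K c k) = cmod (TT n E c' k')"
      using orbit_transfer[OF K(1) s] ck(1,2) by blast
    have "(cmod (transform_entry n (graph_bf n E) c' k'))\<^sup>2 = 2 ^ L / 2 ^ n"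
      unfolding te_sq[OF s] using ck(3) ck'(3) S(2) by simp
    then show ?thesis unfolding A_def using ck'(1,2) by (intro CollectI exI[of _ c'] exI[of _ k']) simp
  qed
  have "Max A = 2 ^ L / 2 ^ n" by (rule Max_eqI[OF finA ub att])
  then show ?thesis unfolding PAR_IHN_def A_def[symmetric] L_def by simp
qed

theorem mainTheorem5:
  fixes n :: nat and G :: "nat set set"
  assumes "simple_graph n G"
  shows "(\<forall>H \<in> lc_orbit n G. PAR_IHN n (graph_bf n H) = 2 ^ lc_lambda n G)
         \<and> PAR_IHN n (graph_bf n G) = 2 ^ lc_lambda n G"
proof -
  have "PAR_IHN n (graph_bf n H) = 2 ^ lc_lambda n G" if H: "H \<in> lc_orbit n G" for H
  proof -
    have sH: "simple_graph n H" using orbit_simple[OF H assms] .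
    have "lc_orbit n H = lc_orbit n G"
    proof
      show "lc_orbit n H \<subseteq> lc_orbit n G" using orbit_trans H by blast
      have "G \<in> lc_orbit n H" using orbit_sym[OF H assms] .
      then show "lc_orbit n G \<subseteq> lc_orbit n H" using orbit_trans by blast
    qed
    then have "lc_lambda n H = lc_lambda n G" unfolding lc_lambda_def by simp
    then show ?thesis using PAR_eq[OF sH] by simp
  qed
  then show ?thesis using lc_orbit.refl by blast
qed

end
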